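(* Let $q$ be an $\varepsilon$-LDP cap-based mechanism from $\mathcal{X}$ to $\mathcal{Z}$, let $\mathbf{x}\in\mathcal{X}$, let $p$ be the uniform distribution on $\mathcal{Z}$, and let $\mathbf{z}_1,\dots,\mathbf{z}_N$ be $N$ i.i.d. candidates from $p$, with $\theta$ the fraction of candidates in $\mathsf{Cap}_{\mathbf{x}}$. Let $\rho\in(0,1)$ be such that $N=\frac{2(e^\varepsilon-1)^2}{\rho^2}\ln\frac2\rho$. Then \[ \mathbb{E}_\theta\Big[D_{\mathrm{KL}}\big(\pi^{\mathrm{mrc}}_{\mathbf{x},\theta}\,\big\|\,\pi^{\mathrm{mmrc}}_{\mathbf{x},\theta}\big)\Big]\le\rho\,\log e\,(1+\varepsilon). \]
   Context: $\log$ is base 2 and KL divergence is in bits. $\varepsilon$-LDP: $q(\mathbf{z}\mid\mathbf{x})\le e^\varepsilon q(\mathbf{z}\mid\mathbf{x}')$ for all $\mathbf{x},\mathbf{x}',\mathbf{z}$. Cap-based: $q(\mathbf{z}\mid\mathbf{x})=c_1$ if $\mathbf{z}\in\mathsf{Cap}_{\mathbf{x}}$, $=c_2$ otherwise, with constants $c_1\ge c_2$ independent of $\mathbf{x},\mathbf{z}$, and $\mathsf{Cap}_{\mathbf{x}}\subseteq\mathcal{Z}$ such that $\bar\theta=\mathbb{P}_{\mathbf{z}\sim\mathrm{Unif}(\mathcal{Z})}(\mathbf{z}\in\mathsf{Cap}_{\mathbf{x}})$ is independent of $\mathbf{x}$ and $\ge c_2/(2c_1)$ (so $\mathbb{E}[\theta]=\bar\theta$).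 $\pi^{\mathrm{mrc}}_{\mathbf{x},\theta}(k)=\frac1N\frac{c_1}{\theta c_1+(1-\theta)c_2}$ if $\mathbf{z}_k\in\mathsf{Cap}_{\mathbf{x}}$ and $\frac1N\frac{c_2}{\theta c_1+(1-\theta)c_2}$ otherwise. With $t_u=\frac1N\frac{c_1}{\bar\theta c_1+(1-\bar\theta)c_2}$, $t_l=\frac1N\frac{c_2}{\bar\theta c_1+(1-\bar\theta)c_2}$: $\pi^{\mathrm{mmrc}}_{\mathbf{x},\theta}=\pi^{\mathrm{mrc}}_{\mathbf{x},\theta}$ if $\theta=\bar\theta$; if $\theta<\bar\theta$, $\pi^{\mathrm{mmrc}}(k)=t_u$ for cap candidates and $\frac{1-N\theta t_u}{N(1-\theta)}$ otherwise; if $\theta>\bar\theta$, $\pi^{\mathrm{mmrc}}(k)=t_l$ for non-cap candidates and $\frac{1-N(1-\theta)t_l}{N\theta}$ otherwise. *)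

theory Defs
  imports "HOL-Probability.Probability"
begin

text \<open>Cap-based mechanism q(z|x) = c1 on Cap x, c2 otherwise; epsilon-LDP;
  P is the uniform (probability) distribution on Z; every cap has P-mass thetabar,
  independent of x, with thetabar >= c2/(2 c1).\<close>
definition cap_based_ldp ::
  "real \<Rightarrow> 'z measure \<Rightarrow> ('x \<Rightarrow> 'z set) \<Rightarrow> ('x \<Rightarrow> 'z \<Rightarrow> real)
     \<Rightarrow> real \<Rightarrow> real \<Rightarrow> real \<Rightarrow> bool" where
  "cap_based_ldp \<epsilon> P Cap q c1 c2 \<theta>bar \<longleftrightarrow>
     prob_space P \<and> 0 < c2 \<and> c2 \<le> c1 \<and> c1 \<le> exp \<epsilon> * c2 \<and>
     (\<forall>x z. q x z = (if z \<in> Cap x then c1 else c2)) \<and>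
     (\<forall>x x' z. q x z \<le> exp \<epsilon> * q x' z) \<and>
     (\<forall>x. Cap x \<in> sets P \<and> measure P (Cap x) = \<theta>bar) \<and>
     c2 / (2 * c1) \<le> \<theta>bar"

definition cap_frac :: "('x \<Rightarrow> 'z set) \<Rightarrow> 'x \<Rightarrow> nat \<Rightarrow> (nat \<Rightarrow> 'z) \<Rightarrow> real" where
  "cap_frac Cap x N zs = real (card {k \<in> {..<N}. zs k \<in> Cap x}) / real N"

definition pi_mrc :: "real \<Rightarrow> real \<Rightarrow> nat \<Rightarrow> real \<Rightarrow> bool \<Rightarrow> real" where
  "pi_mrc c1 c2 N \<theta> incap =
     (1 / real N) * (if incap then c1 else c2) / (\<theta> * c1 + (1 - \<theta>) * c2)"

definition t_u :: "real \<Rightarrow> real \<Rightarrow> nat \<Rightarrow> real \<Rightarrow> real" where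
  "t_u c1 c2 N \<theta>bar = (1 / real N) * c1 / (\<theta>bar * c1 + (1 - \<theta>bar) * c2)"

definition t_l :: "real \<Rightarrow> real \<Rightarrow> nat \<Rightarrow> real \<Rightarrow> real" where
  "t_l c1 c2 N \<theta>bar = (1 / real N) * c2 / (\<theta>bar * c1 + (1 - \<theta>bar) * c2)"

definition pi_mmrc :: "real \<Rightarrow> real \<Rightarrow> nat \<Rightarrow> real \<Rightarrow> real \<Rightarrow> bool \<Rightarrow> real" where
  "pi_mmrc c1 c2 N \<theta>bar \<theta> incap =
     (if \<theta> = \<theta>bar then pi_mrc c1 c2 N \<theta> incap
      else if \<theta> < \<theta>bar then
        (if incap then t_u c1 c2 N \<theta>bar
         else (1 - real N * \<theta> * t_u c1 c2 N \<theta>bar) / (real N * (1 - \<theta>)))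
      else
        (if incap then (1 - real N * (1 - \<theta>) * t_l c1 c2 N \<theta>bar) / (real N * \<theta>)
         else t_l c1 c2 N \<theta>bar))"

definition kl_bits :: "'a set \<Rightarrow> ('a \<Rightarrow> real) \<Rightarrow> ('a \<Rightarrow> real) \<Rightarrow> real" where
  "kl_bits A p q = (\<Sum>k\<in>A. if p k = 0 then 0 else p k * log 2 (p k / q k))"

end

theory Submission
  imports Defs
begin


lemma lt_case:
  fixes c1 c2 tb th n E :: real
  assumes c2: "0 < c2" "c2 \<le> c1" "c1 \<le> E * c2" and th: "0 \<le> th" "th < tb" "tb \<le> 1" and n: "n > 0"
  defines "D \<equiv> th * c1 + (1 - th) * c2" and "Db \<equiv> tb * c1 + (1 - tb) * c2"
  defines "p1 \<equiv> (1/n) * c1 / D" and "p0 \<equiv> (1/n) * c2 / D"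
  defines "q1 \<equiv> (1/n) * c1 / Db"
  defines "q0 \<equiv> (1 - n * th * q1) / (n * (1 - th))"
  shows "0 < p1 / q1 \<and> p1 / q1 \<le> c1 / c2 \<and> 0 < p0 / q0 \<and> p0 / q0 \<le> c1 / c2 \<and>
    n * th * p1 * (p1 / q1 - 1) + n * (1 - th) * p0 * (p0 / q0 - 1) \<le> (tb - th) * (E - 1)"
proof -
  have "th * (c1 - c2) \<ge> 0" using c2 th by simp
  then have D: "D \<ge> c2" unfolding D_def by (simp add: algebra_simps)
  have "tb * (c1 - c2) \<ge> 0" using c2 th by simp
  then have Db: "Db \<ge> c2" unfolding Db_def by (simp add: algebra_simps)
  have "(1 - tb) * (c1 - c2) \<ge> 0" using c2 th by simp
  then have Dbc1: "Db \<le> c1" unfolding Db_def by (simp add: algebra_simps)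
  have r1: "p1 / q1 = Db / D" unfolding p1_def q1_def using D Db c2 n by (simp add: field_simps)
  have b: "Db - th * c1 = (tb - th) * c1 + (1 - tb) * c2" unfolding Db_def by algebra
  have b1: "(tb - th) * c1 > 0" using c2 th by simp
  have b2: "(1 - tb) * c2 \<ge> 0" using c2 th by simp
  have bpos: "Db - th * c1 > 0" using b b1 b2 by linarith
  have q0: "q0 = (Db - th * c1) / (n * (1 - th) * Db)" unfolding q0_def q1_def using n th Db c2 by (simp add: field_simps)
  have r0: "p0 / q0 = c2 * (1 - th) * Db / (D * (Db - th * c1))" unfolding p0_def q0 using D Db c2 n th bpos
    by (simp add: field_simps)
  have "(tb - th) * c2 \<le> (tb - th) * c1" using c2 th by simp
  then have bge: "c2 * (1 - th) \<le> Db - th * c1" unfolding b by (simp add: algebra_simps)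
  have r1le: "Db / D \<le> c1 / c2" using D Db Dbc1 c2 by (simp add: frac_le)
  have r0le: "c2 * (1 - th) * Db / (D * (Db - th * c1)) \<le> Db / D"
  proof -
    have "c2 * (1 - th) * Db / (D * (Db - th * c1)) = (c2 * (1 - th) / (Db - th * c1)) * (Db / D)"
      by (simp add: field_simps)
    also have "\<dots> \<le> 1 * (Db / D)"
      using bge bpos D Db c2 by (intro mult_right_mono) (auto simp: divide_le_eq)
    finally show ?thesis by simp
  qed
  have r0pos: "c2 * (1 - th) * Db / (D * (Db - th * c1)) > 0" using c2 th D Db bpos by simp
  define d where "d = c1 - c2"
  define e where "e = tb - th"
  have Dpos: "D > 0" using D c2 by linarith
  have Dbpos: "Db > 0" using Db c2 by linarith
  have t1: "n * th * p1 = th * c1 / D" unfolding p1_def using n by simp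
  have t0: "n * (1 - th) * p0 = (1 - th) * c2 / D" unfolding p0_def using n by simp
  have DbD: "Db - D = e * d" unfolding Db_def D_def e_def d_def by algebra
  have s1: "p1 / q1 - 1 = e * d / D" unfolding r1 using Dpos DbD by (simp add: field_simps)
  have key: "c2 * (1 - th) * Db - D * (Db - th * c1) = - (th * c1 * e * d)"
    unfolding Db_def D_def e_def d_def by algebra
  have s0: "p0 / q0 - 1 = - (th * c1 * e * d) / (D * (Db - th * c1))"
  proof -
    have "p0 / q0 - 1 = (c2 * (1 - th) * Db - D * (Db - th * c1)) / (D * (Db - th * c1))"
      unfolding r0 using Dpos bpos by (simp add: diff_divide_distrib)
    then show ?thesis unfolding key .
  qed
  have bed: "(Db - th * c1) - c2 * (1 - th) = e * d" unfolding Db_def e_def d_def by algebra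
  have chi: "n * th * p1 * (p1 / q1 - 1) + n * (1 - th) * p0 * (p0 / q0 - 1)
     = th * c1 * e^2 * d^2 / (D^2 * (Db - th * c1))"
  proof -
    have "n * th * p1 * (p1 / q1 - 1) + n * (1 - th) * p0 * (p0 / q0 - 1)
      = th * c1 * e * d / D^2 * (((Db - th * c1) - c2 * (1 - th)) / (Db - th * c1))"
    proof -
      have "n * th * p1 * (p1 / q1 - 1) + n * (1 - th) * p0 * (p0 / q0 - 1)
        = th * c1 / D * (e * d / D) + (1 - th) * c2 / D * (- (th * c1 * e * d) / (D * (Db - th * c1)))"
        by (simp only: t1 t0 s1 s0)
      also have "\<dots> = th * c1 * e * d / D^2 * (1 - c2 * (1 - th) / (Db - th * c1))"
        using Dpos bpos by (simp add: field_simps power2_eq_square)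
      also have "\<dots> = th * c1 * e * d / D^2 * (((Db - th * c1) - c2 * (1 - th)) / (Db - th * c1))"
        using bpos by (simp add: diff_divide_distrib)
      finally show ?thesis .
    qed
    also have "\<dots> = th * c1 * e^2 * d^2 / (D^2 * (Db - th * c1))"
      unfolding bed using Dpos bpos by (simp add: field_simps power2_eq_square)
    finally show ?thesis .
  qed
  have thc: "th * c1 \<le> D" unfolding D_def using c2 th by simp
  have bge2: "Db - th * c1 \<ge> e * c1" unfolding b e_def using b2 by simp
  have "1 * c2 \<le> E * c2" using c2 by linarith
  then have E1: "E \<ge> 1" using c2(1) by (rule mult_right_le_imp_le)
  have e0: "e > 0" unfolding e_def using th by simp
  have d0: "d \<ge> 0" "d \<le> c1" "d \<le> (E - 1) * c2" unfolding d_def using c2 by (auto simp: algebra_simps)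
  have "th * c1 * e^2 * d^2 / (D^2 * (Db - th * c1)) = (th * c1 / D) * (e^2 * d^2 / (D * (Db - th * c1)))"
    by (simp add: power2_eq_square field_simps)
  also have "\<dots> \<le> 1 * (e^2 * d^2 / (D * (Db - th * c1)))"
    using thc D c2 th bpos by (intro mult_right_mono) (auto simp: divide_le_eq)
  also have "\<dots> \<le> e^2 * d^2 / (c2 * (e * c1))"
    unfolding mult_1_left using D bge2 c2 e0 bpos by (intro divide_left_mono mult_mono) auto
  also have "\<dots> = e * (d / c2) * (d / c1)" using c2 e0 by (simp add: power2_eq_square field_simps)
  also have "\<dots> \<le> e * (E - 1) * 1"
    using d0 c2 e0 E1 by (intro mult_mono) (auto simp: divide_le_eq pos_divide_le_eq)
  finally have "n * th * p1 * (p1 / q1 - 1) + n * (1 - th) * p0 * (p0 / q0 - 1) \<le> (tb - th) * (E - 1)"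
    unfolding chi e_def by simp
  then show ?thesis using r1 r0 r1le r0le r0pos D Db c2 by simp
qed

lemma gt_case:
  fixes c1 c2 tb th n E :: real
  assumes c2: "0 < c2" "c2 \<le> c1" "c1 \<le> E * c2" and th: "0 < tb" "tb < th" "th \<le> 1" and n: "n > 0"
    and tbc: "c2 / (2 * c1) \<le> tb"
  defines "D \<equiv> th * c1 + (1 - th) * c2" and "Db \<equiv> tb * c1 + (1 - tb) * c2"
  defines "p1 \<equiv> (1/n) * c1 / D" and "p0 \<equiv> (1/n) * c2 / D"
  defines "q0 \<equiv> (1/n) * c2 / Db"
  defines "q1 \<equiv> (1 - n * (1 - th) * q0) / (n * th)"
  shows "0 < p1 / q1 \<and> p1 / q1 \<le> c1 / c2 \<and> 0 < p0 / q0 \<and> p0 / q0 \<le> c1 / c2 \<and>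
    n * th * p1 * (p1 / q1 - 1) + n * (1 - th) * p0 * (p0 / q0 - 1) \<le> 2 * ((th - tb) * (E - 1))^2"
proof -
  have "th * (c1 - c2) \<ge> 0" using c2 th by simp
  then have D: "D \<ge> c2" unfolding D_def by (simp add: algebra_simps)
  have "tb * (c1 - c2) \<ge> 0" using c2 th by simp
  then have Db: "Db \<ge> c2" unfolding Db_def by (simp add: algebra_simps)
  have Dpos: "D > 0" using D c2 by linarith
  have Dbpos: "Db > 0" using Db c2 by linarith
  define d where "d = c1 - c2"
  define e where "e = th - tb"
  have DDb: "D - Db = e * d" unfolding Db_def D_def e_def d_def by algebra
  have dge: "d \<ge> 0" unfolding d_def using c2 by simp
  have e0: "e > 0" unfolding e_def using th by simp
  have DbD: "Db \<le> D" using DDb dge e0 by (smt (verit) mult_nonneg_nonneg)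
  have r0: "p0 / q0 = Db / D" unfolding p0_def q0_def using Dpos Dbpos c2 n by (simp add: field_simps)
  define a where "a = Db - (1 - th) * c2"
  have a_eq: "a = tb * c1 + e * c2" unfolding a_def Db_def e_def by algebra
  have "c1 * (2 * tb) \<ge> c2" using tbc c2 by (simp add: divide_le_eq mult_ac)
  then have tbc1: "tb * c1 \<ge> c2 / 2" by (simp add: algebra_simps)
  have ec2: "e * c2 \<ge> 0" using e0 c2 by simp
  have age: "a \<ge> c2 / 2" unfolding a_eq using tbc1 ec2 by linarith
  have apos: "a > 0" using age c2 by linarith
  have q1: "q1 = a / (n * th * Db)" unfolding q1_def q0_def a_def using n th Dbpos c2 by (simp add: field_simps)
  have r1: "p1 / q1 = th * c1 * Db / (D * a)" unfolding p1_def q1 using n th Dpos Dbpos apos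
    by (simp add: field_simps)
  have E1: "E \<ge> 1"
  proof -
    have "1 * c2 \<le> E * c2" using c2 by linarith
    then show ?thesis using c2(1) by (rule mult_right_le_imp_le)
  qed
  have c1c2: "1 \<le> c1 / c2" using c2 by simp
  have r0le: "Db / D \<le> c1 / c2" using DbD Dpos c1c2 by (smt (verit) divide_le_eq_1_pos)
  have "th * c2 \<le> a" unfolding a_eq e_def using th c2 by (simp add: algebra_simps)
  then have "c1 * (th * c2) \<le> c1 * a" using c2 by (intro mult_left_mono) auto
  then have thca: "th * c1 / a \<le> c1 / c2" using apos c2 th
    by (simp add: divide_le_eq le_divide_eq mult_ac)
  have r1le: "th * c1 * Db / (D * a) \<le> c1 / c2"
  proof -
    have "th * c1 * Db / (D * a) = (th * c1 / a) * (Db / D)" by (simp add: field_simps)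
    also have "\<dots> \<le> (th * c1 / a) * 1"
      using DbD Dpos apos th c2 by (intro mult_left_mono) auto
    finally show ?thesis using thca by simp
  qed
  have r1pos: "th * c1 * Db / (D * a) > 0" using th c2 Dpos Dbpos apos by simp
  have r0pos: "Db / D > 0" using Dpos Dbpos by simp
  have t1: "n * th * p1 = th * c1 / D" unfolding p1_def using n by simp
  have t0: "n * (1 - th) * p0 = (1 - th) * c2 / D" unfolding p0_def using n by simp
  have key: "th * c1 * Db - D * a = (1 - th) * c2 * e * d"
    unfolding a_def Db_def D_def e_def d_def by algebra
  have s1: "p1 / q1 - 1 = (1 - th) * c2 * e * d / (D * a)"
  proof -
    have "p1 / q1 - 1 = (th * c1 * Db - D * a) / (D * a)"
      unfolding r1 using Dpos apos by (simp add: diff_divide_distrib)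
    then show ?thesis unfolding key .
  qed
  have s0: "p0 / q0 - 1 = - (e * d) / D"
  proof -
    have "p0 / q0 - 1 = (Db - D) / D" unfolding r0 using Dpos by (simp add: diff_divide_distrib)
    also have "Db - D = - (e * d)" using DDb by linarith
    finally show ?thesis by simp
  qed
  have aed: "th * c1 - a = e * d" unfolding a_def Db_def e_def d_def by algebra
  have chi: "n * th * p1 * (p1 / q1 - 1) + n * (1 - th) * p0 * (p0 / q0 - 1)
     = (1 - th) * c2 * e^2 * d^2 / (D^2 * a)"
  proof -
    have "n * th * p1 * (p1 / q1 - 1) + n * (1 - th) * p0 * (p0 / q0 - 1)
        = th * c1 / D * ((1 - th) * c2 * e * d / (D * a)) + (1 - th) * c2 / D * (- (e * d) / D)"
      by (simp only: t1 t0 s1 s0)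
    also have "\<dots> = (1 - th) * c2 * e * d / D^2 * (th * c1 / a - 1)"
      using Dpos apos by (simp add: field_simps power2_eq_square)
    also have "\<dots> = (1 - th) * c2 * e * d / D^2 * ((th * c1 - a) / a)"
      using apos by (simp add: diff_divide_distrib)
    also have "\<dots> = (1 - th) * c2 * e^2 * d^2 / (D^2 * a)"
      unfolding aed using Dpos apos by (simp add: field_simps power2_eq_square)
    finally show ?thesis .
  qed
  have thc: "(1 - th) * c2 \<le> D" unfolding D_def using c2 th by simp
  have d1: "d \<le> (E - 1) * c2" unfolding d_def using c2 by (simp add: algebra_simps)
  have "(1 - th) * c2 * e^2 * d^2 / (D^2 * a) = ((1 - th) * c2 / D) * (e^2 * d^2 / (D * a))"
    by (simp add: power2_eq_square field_simps)
  also have "\<dots> \<le> 1 * (e^2 * d^2 / (D * a))"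
    using thc Dpos apos th c2 by (intro mult_right_mono) (auto simp: divide_le_eq)
  also have "\<dots> \<le> e^2 * d^2 / (c2 * (c2 / 2))"
    unfolding mult_1_left using D age c2 apos by (intro divide_left_mono mult_mono) auto
  also have "\<dots> = 2 * (e * (d / c2))^2" using c2 by (simp add: power2_eq_square field_simps)
  also have "\<dots> \<le> 2 * (e * (E - 1))^2"
    using d1 dge c2 e0 E1 by (intro mult_left_mono power_mono mult_left_mono) (auto simp: divide_le_eq pos_divide_le_eq)
  finally have "n * th * p1 * (p1 / q1 - 1) + n * (1 - th) * p0 * (p0 / q0 - 1) \<le> 2 * ((th - tb) * (E - 1))^2"
    unfolding chi e_def by simp
  then show ?thesis using r1 r0 r1le r0le r0pos r1pos by simp
qed



lemma ln_bounds:
  fixes w1 w0 r1 r0 R :: real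
  assumes "w1 \<ge> 0" "w0 \<ge> 0" "w1 + w0 = 1" "r1 > 0" "r0 > 0" "r1 \<le> R" "r0 \<le> R"
  shows "w1 * ln r1 + w0 * ln r0 \<le> ln R" "w1 * ln r1 + w0 * ln r0 \<le> w1 * (r1 - 1) + w0 * (r0 - 1)"
proof -
  have "w1 * ln r1 + w0 * ln r0 \<le> w1 * ln R + w0 * ln R"
    using assms by (intro add_mono mult_left_mono) auto
  also have "\<dots> = ln R" using assms(3) by (simp add: algebra_simps flip: distrib_right)
  finally show "w1 * ln r1 + w0 * ln r0 \<le> ln R" .
  show "w1 * ln r1 + w0 * ln r0 \<le> w1 * (r1 - 1) + w0 * (r0 - 1)"
    using assms by (intro add_mono mult_left_mono ln_le_minus_one) auto
qed

lemma pointwise: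
  fixes c1 c2 tb \<epsilon> \<rho> :: real and N m :: nat
  assumes c2: "0 < c2" "c2 \<le> c1" "c1 \<le> exp \<epsilon> * c2" and tb: "0 < tb" "tb \<le> 1" "c2 / (2 * c1) \<le> tb"
    and N: "N > 0" "m \<le> N" and rho: "0 < \<rho>" "\<rho> < 1"
  defines "th \<equiv> real m / real N"
  defines "h \<equiv> (\<lambda>b. if pi_mrc c1 c2 N th b = 0 then 0 else
      pi_mrc c1 c2 N th b * log 2 (pi_mrc c1 c2 N th b / pi_mmrc c1 c2 N tb th b))"
  shows "real m * h True + real (N - m) * h False \<le> \<epsilon> * log 2 (exp 1)"
    and "\<bar>th - tb\<bar> * (exp \<epsilon> - 1) \<le> \<rho> / 2 \<Longrightarrow>
         real m * h True + real (N - m) * h False \<le> \<rho> * log 2 (exp 1)"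
proof -
  define D where "D = th * c1 + (1 - th) * c2"
  have th01: "0 \<le> th" "th \<le> 1" unfolding th_def using N by auto
  have "th * (c1 - c2) \<ge> 0" using c2 th01 by simp
  then have D: "D \<ge> c2" unfolding D_def by (simp add: algebra_simps)
  define f where "f = pi_mrc c1 c2 N th"
  define g where "g = pi_mmrc c1 c2 N tb th"
  have fpos: "f b > 0" for b unfolding f_def pi_mrc_def using N D c2 by (auto simp: D_def[symmetric])
  have hb: "h b = f b * ln (f b / g b) * log 2 (exp 1)" for b
    unfolding h_def f_def[symmetric] g_def[symmetric] using fpos[of b] by (simp add: log_def)
  have mN: "real m = real N * th" "real (N - m) = real N * (1 - th)" unfolding th_def using N
    by (auto simp: of_nat_diff field_simps)
  define L where "L = real N * th * f True * ln (f True / g True) + real N * (1 - th) * f False * ln (f False / g False)"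
  have KL: "real m * h True + real (N - m) * h False = L * log 2 (exp 1)"
    unfolding hb mN L_def by algebra
  have w1: "real N * th * f True = th * c1 / D" and w0: "real N * (1 - th) * f False = (1 - th) * c2 / D"
    unfolding f_def pi_mrc_def D_def[symmetric] using N D c2 by auto
  have wsum: "th * c1 / D + (1 - th) * c2 / D = 1" using D c2 by (simp add: add_divide_distrib[symmetric] D_def)
  have w1p: "th * c1 / D \<ge> 0" and w0p: "(1 - th) * c2 / D \<ge> 0" using th01 c2 D by auto
  have lnR: "ln (c1 / c2) \<le> \<epsilon>"
  proof -
    have "c1 / c2 \<le> exp \<epsilon>" using c2 by (simp add: divide_le_eq mult.commute)
    then have "ln (c1 / c2) \<le> ln (exp \<epsilon>)" using c2 by (intro ln_mono) auto
    then show ?thesis by simp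
  qed
  have l2: "log 2 (exp 1) > 0" by simp
  have eps0: "\<epsilon> \<ge> 0" proof - have "c1 / c2 \<ge> 1" using c2 by simp then have "ln (c1 / c2) \<ge> 0" by simp then show ?thesis using lnR by linarith qed
  have main: "L \<le> \<epsilon> \<and> (\<bar>th - tb\<bar> * (exp \<epsilon> - 1) \<le> \<rho> / 2 \<longrightarrow> L \<le> \<rho>)"
  proof (cases "th = tb")
    case True
    then have "g b = f b" for b unfolding g_def f_def pi_mmrc_def by simp
    then have "L = 0" unfolding L_def using fpos by simp
    moreover note eps0
    ultimately show ?thesis using rho by simp
  next
    case False
    show ?thesis
    proof (cases "th < tb")
      case True
      note lt = lt_case[OF c2 th01(1) True tb(2), of "real N"]
      have gT: "g True = (1/real N) * c1 / (tb * c1 + (1 - tb) * c2)"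
        unfolding g_def pi_mmrc_def t_u_def using True False by simp
      have gF: "g False = (1 - real N * th * ((1/real N) * c1 / (tb * c1 + (1 - tb) * c2))) / (real N * (1 - th))"
        unfolding g_def pi_mmrc_def t_u_def using True False by simp
      have fT: "f True = (1/real N) * c1 / D" and fF: "f False = (1/real N) * c2 / D"
        unfolding f_def pi_mrc_def D_def by simp_all
      have R: "0 < f True / g True \<and> f True / g True \<le> c1 / c2 \<and> 0 < f False / g False \<and> f False / g False \<le> c1 / c2 \<and>
          real N * th * f True * (f True / g True - 1) + real N * (1 - th) * f False * (f False / g False - 1) \<le> (tb - th) * (exp \<epsilon> - 1)"
        unfolding gT gF fT fF D_def using lt N by simp
      have L1: "L \<le> ln (c1 / c2)" "L \<le> real N * th * f True * (f True / g True - 1) + real N * (1 - th) * f False * (f False / g False - 1)"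
        unfolding L_def w1 w0 using ln_bounds[OF w1p w0p wsum, of "f True / g True" "f False / g False" "c1/c2"] R
        unfolding w1 w0 by (auto simp: mult.assoc)
      show ?thesis using L1 lnR R True rho by auto
    next
      case False2: False
      then have gt: "tb < th" using False by simp
      note gtc = gt_case[OF c2 tb(1) gt th01(2), of "real N"]
      have gF: "g False = (1/real N) * c2 / (tb * c1 + (1 - tb) * c2)"
        unfolding g_def pi_mmrc_def t_l_def using gt False by simp
      have gT: "g True = (1 - real N * (1 - th) * ((1/real N) * c2 / (tb * c1 + (1 - tb) * c2))) / (real N * th)"
        unfolding g_def pi_mmrc_def t_l_def using gt False by simp
      have fT: "f True = (1/real N) * c1 / D" and fF: "f False = (1/real N) * c2 / D"
        unfolding f_def pi_mrc_def D_def by simp_all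
      have R: "0 < f True / g True \<and> f True / g True \<le> c1 / c2 \<and> 0 < f False / g False \<and> f False / g False \<le> c1 / c2 \<and>
          real N * th * f True * (f True / g True - 1) + real N * (1 - th) * f False * (f False / g False - 1) \<le> 2 * ((th - tb) * (exp \<epsilon> - 1))^2"
        unfolding gT gF fT fF D_def using gtc N tb(3) by simp
      have L1: "L \<le> ln (c1 / c2)" "L \<le> real N * th * f True * (f True / g True - 1) + real N * (1 - th) * f False * (f False / g False - 1)"
        unfolding L_def w1 w0 using ln_bounds[OF w1p w0p wsum, of "f True / g True" "f False / g False" "c1/c2"] R
        unfolding w1 w0 by (auto simp: mult.assoc)
      have "\<bar>th - tb\<bar> * (exp \<epsilon> - 1) \<le> \<rho> / 2 \<Longrightarrow> 2 * ((th - tb) * (exp \<epsilon> - 1))^2 \<le> \<rho>"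
      proof -
        assume a: "\<bar>th - tb\<bar> * (exp \<epsilon> - 1) \<le> \<rho> / 2"
        have "(th - tb) * (exp \<epsilon> - 1) \<ge> 0" using gt eps0 by simp
        then have "((th - tb) * (exp \<epsilon> - 1))^2 \<le> (\<rho>/2)^2" using a gt by (intro power_mono) auto
        then show ?thesis using rho by (simp add: power2_eq_square) (smt (verit) mult_left_le_one_le)
      qed
      then show ?thesis using L1 lnR R rho by auto
    qed
  qed
  show "real m * h True + real (N - m) * h False \<le> \<epsilon> * log 2 (exp 1)"
    unfolding KL using main l2 by (intro mult_right_mono) auto
  show "\<bar>th - tb\<bar> * (exp \<epsilon> - 1) \<le> \<rho> / 2 \<Longrightarrow>
         real m * h True + real (N - m) * h False \<le> \<rho> * log 2 (exp 1)"
    unfolding KL using main l2 by (intro mult_right_mono) auto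
qed


lemma sum_bool_split:
  fixes H :: "bool \<Rightarrow> real" and P :: "nat \<Rightarrow> bool" and N :: nat
  shows "(\<Sum>k\<in>{..<N}. H (P k)) = real (card {k\<in>{..<N}. P k}) * H True + real (N - card {k\<in>{..<N}. P k}) * H False"
proof -
  have "(\<Sum>k\<in>{..<N}. H (P k)) = (\<Sum>k\<in>{k\<in>{..<N}. P k}. H (P k)) + (\<Sum>k\<in>{k\<in>{..<N}. \<not> P k}. H (P k))"
  proof -
    have eq: "{..<N} = {k\<in>{..<N}. P k} \<union> {k\<in>{..<N}. \<not> P k}" by auto
    have "(\<Sum>k\<in>{..<N}. H (P k)) = (\<Sum>k\<in>{k\<in>{..<N}. P k} \<union> {k\<in>{..<N}. \<not> P k}. H (P k))"
      by (rule sum.cong[OF eq refl])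
    also have "\<dots> = (\<Sum>k\<in>{k\<in>{..<N}. P k}. H (P k)) + (\<Sum>k\<in>{k\<in>{..<N}. \<not> P k}. H (P k))"
      by (rule sum.union_disjoint) auto
    finally show ?thesis .
  qed
  also have "\<dots> = real (card {k\<in>{..<N}. P k}) * H True + real (card {k\<in>{..<N}. \<not> P k}) * H False"
    by simp
  also have "card {k\<in>{..<N}. \<not> P k} = N - card {k\<in>{..<N}. P k}"
  proof -
    have "{k\<in>{..<N}. \<not> P k} = {..<N} - {k\<in>{..<N}. P k}" by auto
    moreover have "card ({..<N} - {k\<in>{..<N}. P k}) = card {..<N} - card {k\<in>{..<N}. P k}"
      by (rule card_Diff_subset) auto
    ultimately show ?thesis by simp
  qed
  finally show ?thesis .
qed

theorem lemma4:
  fixes \<epsilon> \<rho> c1 c2 \<theta>bar :: real and P :: "'z measure" and Cap :: "'x \<Rightarrow> 'z set"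
    and q :: "'x \<Rightarrow> 'z \<Rightarrow> real" and x :: 'x and N :: nat
  assumes mech: "cap_based_ldp \<epsilon> P Cap q c1 c2 \<theta>bar"
    and rho: "0 < \<rho>" "\<rho> < 1"
    and N: "real N = 2 * (exp \<epsilon> - 1)^2 / \<rho>^2 * ln (2 / \<rho>)"
  shows "(\<integral>zs. kl_bits {..<N}
              (\<lambda>k. pi_mrc c1 c2 N (cap_frac Cap x N zs) (zs k \<in> Cap x))
              (\<lambda>k. pi_mmrc c1 c2 N \<theta>bar (cap_frac Cap x N zs) (zs k \<in> Cap x))
            \<partial>(PiM {..<N} (\<lambda>_. P)))
         \<le> \<rho> * log 2 (exp 1) * (1 + \<epsilon>)"
proof -
  have Pp: "prob_space P" and c2: "0 < c2" "c2 \<le> c1" "c1 \<le> exp \<epsilon> * c2"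
    and capm: "Cap x \<in> sets P" and capmeas: "measure P (Cap x) = \<theta>bar"
    and tbc: "c2 / (2 * c1) \<le> \<theta>bar"
    using mech unfolding cap_based_ldp_def by auto
  interpret P: prob_space P by (fact Pp)
  have tb0: "\<theta>bar > 0" using tbc c2 by (smt (verit) divide_pos_pos)
  have tb1: "\<theta>bar \<le> 1" using capmeas P.prob_le_1 by metis
  have E1: "exp \<epsilon> \<ge> 1"
  proof -
    have "1 * c2 \<le> exp \<epsilon> * c2" using c2 by linarith
    then show ?thesis using c2(1) by (rule mult_right_le_imp_le)
  qed
  then have eps0: "\<epsilon> \<ge> 0" by simp
  have l2: "log 2 (exp 1) > 0" by simp
  define M where "M = PiM {..<N} (\<lambda>_. P)"
  interpret M: prob_space M unfolding M_def by (intro prob_space_PiM Pp)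
  define cnt where "cnt = (\<lambda>zs. card {k\<in>{..<N}. zs k \<in> Cap x})"
  define H where "H = (\<lambda>m::nat. \<lambda>b. if pi_mrc c1 c2 N (real m / real N) b = 0 then 0 else
      pi_mrc c1 c2 N (real m / real N) b * log 2 (pi_mrc c1 c2 N (real m / real N) b / pi_mmrc c1 c2 N \<theta>bar (real m / real N) b))"
  define G where "G = (\<lambda>m. real m * H m True + real (N - m) * H m False)"
  have Feq: "kl_bits {..<N}
              (\<lambda>k. pi_mrc c1 c2 N (cap_frac Cap x N zs) (zs k \<in> Cap x))
              (\<lambda>k. pi_mmrc c1 c2 N \<theta>bar (cap_frac Cap x N zs) (zs k \<in> Cap x)) = G (cnt zs)" for zs
  proof -
    have "kl_bits {..<N}
              (\<lambda>k. pi_mrc c1 c2 N (cap_frac Cap x N zs) (zs k \<in> Cap x))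
              (\<lambda>k. pi_mmrc c1 c2 N \<theta>bar (cap_frac Cap x N zs) (zs k \<in> Cap x)) = (\<Sum>k\<in>{..<N}. H (cnt zs) (zs k \<in> Cap x))"
      unfolding kl_bits_def H_def cap_frac_def cnt_def by simp
    also have "\<dots> = G (cnt zs)" unfolding G_def cnt_def by (rule sum_bool_split)
    finally show ?thesis .
  qed
  show ?thesis
  proof (cases "N = 0")
    case True
    then show ?thesis using rho eps0 l2 by (simp add: kl_bits_def)
  next
    case False
    then have Npos: "N > 0" by simp
    have Eg: "exp \<epsilon> - 1 > 0"
    proof (rule ccontr)
      assume "\<not> exp \<epsilon> - 1 > 0"
      then have "exp \<epsilon> - 1 = 0" using E1 by simp
      then have "real N = 0" using N by simp
      then show False using Npos by simp
    qed
    define X where "X = (\<lambda>k (zs::nat \<Rightarrow> 'z). indicator (Cap x) (zs k) :: real)"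
    have Xsum: "(\<Sum>k\<in>{..<N}. X k zs) = real (cnt zs)" for zs
    proof -
      have "(\<Sum>k\<in>{..<N}. X k zs) = (\<Sum>k\<in>{..<N}. if zs k \<in> Cap x then 1 else 0)"
        by (rule sum.cong) (auto simp: X_def indicator_def)
      also have "\<dots> = real (card {k\<in>{..<N}. zs k \<in> Cap x})"
        using sum.inter_filter[of "{..<N}" "\<lambda>_. 1::real" "\<lambda>k. zs k \<in> Cap x"] by simp
      finally show ?thesis unfolding cnt_def .
    qed
    have Xm: "X k \<in> borel_measurable M" if "k < N" for k
      unfolding X_def M_def using that capm
      by (intro measurable_compose[OF measurable_component_singleton borel_measurable_indicator]) auto
    have Sm: "(\<lambda>zs. \<Sum>k\<in>{..<N}. X k zs) \<in> borel_measurable M"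
      using Xm by (intro borel_measurable_sum) auto
    have cntm: "cnt \<in> measurable M (count_space UNIV)"
    proof (subst measurable_count_space_eq2_countable, intro conjI ballI)
      show "cnt \<in> space M \<rightarrow> UNIV" by simp
      fix a :: nat
      have "cnt -` {a} \<inter> space M = (\<lambda>zs. \<Sum>k\<in>{..<N}. X k zs) -` {real a} \<inter> space M"
        unfolding Xsum by auto
      also have "\<dots> \<in> sets M" by (rule measurable_sets[OF Sm]) simp
      finally show "cnt -` {a} \<inter> space M \<in> sets M" .
    qed
    have Fm: "(\<lambda>zs. G (cnt zs)) \<in> borel_measurable M"
      by (rule measurable_compose_countable[where f="\<lambda>i _. G i", OF _ cntm]) simp
    have cnt_le: "cnt zs \<le> N" for zs
    proof -
      have "cnt zs \<le> card {..<N}" unfolding cnt_def by (intro card_mono) auto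
      then show ?thesis by simp
    qed
    define B where "B = (\<Sum>j\<in>{..N}. \<bar>G j\<bar>)"
    have Gb: "\<bar>G (cnt zs)\<bar> \<le> B" for zs
      unfolding B_def using cnt_le[of zs] by (intro member_le_sum[where f="\<lambda>j. \<bar>G j\<bar>"]) auto
    have Fint: "integrable M (\<lambda>zs. G (cnt zs))"
      by (rule M.integrable_const_bound[where B=B]) (use Gb Fm in auto)
    have rv0: "(\<lambda>zs. zs k) \<in> measurable M P" if "k \<in> {..<N}" for k
      unfolding M_def using that by (intro measurable_component_singleton) auto
    have indep0: "M.indep_vars (\<lambda>_. P) (\<lambda>k zs. zs k) {..<N}"
    proof (subst M.indep_vars_iff_distr_eq_PiM')
      show "{..<N} \<noteq> {}" using Npos by auto
      show "\<And>i. i \<in> {..<N} \<Longrightarrow> (\<lambda>zs. zs i) \<in> measurable M P" using rv0 by blast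
      have "(\<Pi>\<^sub>M i\<in>{..<N}. distr M P (\<lambda>zs. zs i)) = (\<Pi>\<^sub>M i\<in>{..<N}. P)"
        unfolding M_def by (intro PiM_cong refl distr_PiM_component) (auto intro: Pp)
      also have "\<dots> = M" unfolding M_def ..
      also have "M = distr M M (\<lambda>zs. zs)" by simp
      also have "distr M M (\<lambda>zs. zs) = distr M (\<Pi>\<^sub>M i\<in>{..<N}. P) (\<lambda>zs. \<lambda>i\<in>{..<N}. zs i)"
        unfolding M_def by (intro distr_cong refl) (auto simp: space_PiM)
      finally show "distr M (\<Pi>\<^sub>M i\<in>{..<N}. P) (\<lambda>zs. \<lambda>i\<in>{..<N}. zs i) = (\<Pi>\<^sub>M i\<in>{..<N}. distr M P (\<lambda>zs. zs i))" ..
    qed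
    have indepX: "M.indep_vars (\<lambda>_. borel) X {..<N}"
      unfolding X_def using capm by (intro M.indep_vars_compose2[OF indep0]) auto
    have EX: "M.expectation (X k) = \<theta>bar" if "k \<in> {..<N}" for k
    proof -
      have "M.expectation (X k) = integral\<^sup>L (distr M P (\<lambda>zs. zs k)) (indicator (Cap x))"
        unfolding X_def using capm by (subst integral_distr[OF rv0[OF that]]) auto
      also have "distr M P (\<lambda>zs. zs k) = P" unfolding M_def using that
        by (intro distr_PiM_component) (auto intro: Pp)
      finally show ?thesis using capm capmeas by (simp add: sets.Int_space_eq2)
    qed
    interpret H: Hoeffding_ineq M "{..<N}" X "\<lambda>_. 0" "\<lambda>_. 1" "real N * \<theta>bar"
    proof unfold_locales
      show "finite {..<N}" by simp
      show "M.indep_vars (\<lambda>_. borel) X {..<N}" by (fact indepX)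
      show "AE x in M. X i x \<in> {0..1}" if "i \<in> {..<N}" for i by (auto simp: X_def indicator_def)
      show "real N * \<theta>bar \<equiv> \<Sum>i\<in>{..<N}. M.expectation (X i)" using EX by simp
    qed
    define \<delta> where "\<delta> = real N * \<rho> / (2 * (exp \<epsilon> - 1))"
    have \<delta>0: "\<delta> \<ge> 0" unfolding \<delta>_def using rho Eg by simp
    define HS where "HS = {zs \<in> space M. \<bar>(\<Sum>k\<in>{..<N}. X k zs) - real N * \<theta>bar\<bar> \<ge> \<delta>}"
    have hoef: "M.prob HS \<le> 2 * exp (-2 * \<delta>^2 / real N)"
      using H.Hoeffding_ineq_abs_ge[OF \<delta>0] Npos unfolding HS_def by simp
    have "2 * \<delta>^2 / real N = real N * \<rho>^2 / (2 * (exp \<epsilon> - 1)^2)"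
    proof -
      define E' where "E' = exp \<epsilon> - 1"
      have "E' > 0" using Eg E'_def by simp
      then show ?thesis unfolding \<delta>_def E'_def[symmetric] using Npos by (simp add: power2_eq_square field_simps)
    qed
    also have "\<dots> = ln (2 / \<rho>)"
    proof -
      define E' where "E' = exp \<epsilon> - 1"
      have "E' > 0" using Eg E'_def by simp
      then show ?thesis unfolding N E'_def[symmetric] using rho by (simp add: power2_eq_square field_simps)
    qed
    finally have "2 * \<delta>^2 / real N = ln (2 / \<rho>)" .
    then have "2 * exp (-2 * \<delta>^2 / real N) = \<rho>" using rho by (simp add: exp_minus)
    with hoef have probHS: "M.prob HS \<le> \<rho>" by simp
    have HSm: "HS \<in> sets M"
    proof -
      have "HS = (\<lambda>zs. \<bar>(\<Sum>k\<in>{..<N}. X k zs) - real N * \<theta>bar\<bar>) -` {\<delta>..} \<inter> space M"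
        unfolding HS_def by auto
      also have "\<dots> \<in> sets M" by (rule measurable_sets[of _ _ borel]) (use Sm in auto)
      finally show ?thesis .
    qed
    have pw: "G (cnt zs) \<le> log 2 (exp 1) * (\<rho> + \<epsilon> * indicator HS zs)" if zs: "zs \<in> space M" for zs
    proof -
      note pwl = pointwise[OF c2 tb0 tb1 tbc Npos cnt_le[of zs] rho]
      have G1: "G (cnt zs) \<le> \<epsilon> * log 2 (exp 1)" using pwl(1) unfolding G_def H_def by simp
      show ?thesis
      proof (cases "zs \<in> HS")
        case True
        have "log 2 (exp 1) * \<epsilon> \<le> log 2 (exp 1) * (\<rho> + \<epsilon>)" using rho l2 by (intro mult_left_mono) auto
        then have "\<epsilon> * log 2 (exp 1) \<le> log 2 (exp 1) * (\<rho> + \<epsilon>)" by (simp only: mult.commute)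
        then have "G (cnt zs) \<le> log 2 (exp 1) * (\<rho> + \<epsilon>)" using G1 by linarith
        then show ?thesis using True by simp
      next
        case False
        then have "\<bar>real (cnt zs) - real N * \<theta>bar\<bar> < \<delta>" using zs Xsum unfolding HS_def by auto
        then have "\<bar>real (cnt zs) / real N - \<theta>bar\<bar> < \<rho> / (2 * (exp \<epsilon> - 1))"
          unfolding \<delta>_def using Npos
          by (smt (verit, ccfv_SIG) nonzero_mult_div_cancel_left divide_divide_eq_left' abs_divide diff_divide_distrib of_nat_0_less_iff divide_strict_right_mono abs_of_pos times_divide_eq_right)
        then have "\<bar>real (cnt zs) / real N - \<theta>bar\<bar> * (exp \<epsilon> - 1) \<le> \<rho> / 2"
          using Eg by (simp add: pos_less_divide_eq algebra_simps)
        then have "G (cnt zs) \<le> \<rho> * log 2 (exp 1)" using pwl(2) unfolding G_def H_def by simp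
        then show ?thesis using False by (simp add: mult.commute)
      qed
    qed
    have int2: "integrable M (\<lambda>zs. log 2 (exp 1) * (\<rho> + \<epsilon> * indicator HS zs))"
      using HSm by (intro integrable_mult_right Bochner_Integration.integrable_add integrable_mult_right integrable_real_indicator) (auto simp: M.emeasure_finite top.not_eq_extremum[symmetric])
    have "(\<integral>zs. G (cnt zs) \<partial>M) \<le> (\<integral>zs. log 2 (exp 1) * (\<rho> + \<epsilon> * indicator HS zs) \<partial>M)"
      by (rule integral_mono[OF Fint int2 pw])
    also have "\<dots> = log 2 (exp 1) * (\<rho> + \<epsilon> * M.prob HS)"
    proof -
      have ii: "integrable M (\<lambda>zs. \<epsilon> * indicator HS zs :: real)"
        using HSm by (intro integrable_mult_right integrable_real_indicator) (auto simp: M.emeasure_finite top.not_eq_extremum[symmetric])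
      have "(\<integral>zs. \<rho> + \<epsilon> * indicator HS zs \<partial>M) = (\<integral>zs. \<rho> \<partial>M) + (\<integral>zs. \<epsilon> * indicator HS zs \<partial>M)"
        by (rule Bochner_Integration.integral_add[OF _ ii]) simp
      also have "\<dots> = \<rho> + \<epsilon> * M.prob HS"
        using HSm by (simp add: M.prob_space sets.Int_space_eq2)
      finally show ?thesis by simp
    qed
    also have "\<dots> \<le> log 2 (exp 1) * (\<rho> + \<epsilon> * \<rho>)"
      using probHS eps0 l2 by (intro mult_left_mono add_left_mono) auto
    also have "\<dots> = \<rho> * log 2 (exp 1) * (1 + \<epsilon>)" by (simp add: algebra_simps)
    finally show ?thesis unfolding Feq M_def .
  qed
qed

end
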